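(* Let $G$ be a connected graph and $I\subseteq V(G)$. (1) If $I$ is a pre-cycle core of $G$, then $\pi_1(G|_I;x,y)=\pi_1(G;x,y)$ for all $x,y\in I$. (2) Conversely, if $x\in I$ and $\pi_1(G|_I;x)=\pi_1(G;x)$, then the connected component of $G|_I$ containing $x$ contains all cycles of $G$.
   Context: Graphs are simple and unoriented, possibly infinite. A cycle in $G$ is a closed path $(x_0,\dots,x_n=x_0)$ with no repeated vertices except $x_0=x_n$ and no edges $(x_i,x_j)$ of $G$ with $i-j\not\equiv0,\pm1\pmod n$. A pre-cycle core of $G$ is a subset $I\subseteq V(G)$ such that $G|_I$ is connected and contains all cycles of $G$. The fundamental groupoid of $G$ has, for vertices $x,y$, the set $\pi_1(G;x,y)$ of homotopy classes of paths from $x$ to $y$ (equivalently, the set of non-backtracking paths from $x$ to $y$, each class having a unique non-backtracking representative); $\pi_1(G;x)=\pi_1(G;x,x)$. For a subgraph $H$, $\pi_1(H;x,y)$ is regarded naturally as a subset of $\pi_1(G;x,y)$. *)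

theory Defs
  imports Main
begin

definition sgraph :: "'a set \<Rightarrow> ('a \<Rightarrow> 'a \<Rightarrow> bool) \<Rightarrow> bool" where
  "sgraph V E \<longleftrightarrow> (\<forall>x y. E x y \<longrightarrow> E y x \<and> x \<noteq> y \<and> x \<in> V \<and> y \<in> V)"

definition induced :: "('a \<Rightarrow> 'a \<Rightarrow> bool) \<Rightarrow> 'a set \<Rightarrow> 'a \<Rightarrow> 'a \<Rightarrow> bool" where
  "induced E I x y \<longleftrightarrow> E x y \<and> x \<in> I \<and> y \<in> I"

definition walk :: "'a set \<Rightarrow> ('a \<Rightarrow> 'a \<Rightarrow> bool) \<Rightarrow> 'a list \<Rightarrow> bool" where
  "walk V E xs \<longleftrightarrow> xs \<noteq> [] \<and> set xs \<subseteq> V \<and>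
     (\<forall>i. Suc i < length xs \<longrightarrow> E (xs ! i) (xs ! Suc i))"

definition non_backtracking :: "'a list \<Rightarrow> bool" where
  "non_backtracking xs \<longleftrightarrow> (\<forall>i. Suc (Suc i) < length xs \<longrightarrow> xs ! i \<noteq> xs ! Suc (Suc i))"

text \<open>pi_1(G;x,y), represented by the unique non-backtracking representatives.\<close>
definition pi1 :: "'a set \<Rightarrow> ('a \<Rightarrow> 'a \<Rightarrow> bool) \<Rightarrow> 'a \<Rightarrow> 'a \<Rightarrow> 'a list set" where
  "pi1 V E x y = {xs. walk V E xs \<and> hd xs = x \<and> last xs = y \<and> non_backtracking xs}"

definition connected_graph :: "'a set \<Rightarrow> ('a \<Rightarrow> 'a \<Rightarrow> bool) \<Rightarrow> bool" where
  "connected_graph V E \<longleftrightarrow> (\<forall>x\<in>V. \<forall>y\<in>V. \<exists>xs. walk V E xs \<and> hd xs = x \<and> last xs = y)"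

definition component :: "'a set \<Rightarrow> ('a \<Rightarrow> 'a \<Rightarrow> bool) \<Rightarrow> 'a \<Rightarrow> 'a set" where
  "component V E x = {y. \<exists>xs. walk V E xs \<and> hd xs = x \<and> last xs = y}"

text \<open>A cycle (x_0,...,x_n = x_0), stored as the list [x_0,...,x_{n-1}]: n \<ge> 3 distinct
vertices, consecutive ones adjacent (cyclically), and no other edges among them
(edges (x_i,x_j) only if i - j = \<plusminus>1 mod n).\<close>
definition is_cycle :: "'a set \<Rightarrow> ('a \<Rightarrow> 'a \<Rightarrow> bool) \<Rightarrow> 'a list \<Rightarrow> bool" where
  "is_cycle V E xs \<longleftrightarrow> length xs \<ge> 3 \<and> distinct xs \<and> set xs \<subseteq> V \<and>
     (\<forall>i < length xs. E (xs ! i) (xs ! ((i + 1) mod length xs))) \<and>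
     (\<forall>i < length xs. \<forall>j < length xs. E (xs ! i) (xs ! j) \<longrightarrow>
        (int i - int j) mod int (length xs) \<in> {1, int (length xs) - 1})"

definition pre_cycle_core :: "'a set \<Rightarrow> ('a \<Rightarrow> 'a \<Rightarrow> bool) \<Rightarrow> 'a set \<Rightarrow> bool" where
  "pre_cycle_core V E I \<longleftrightarrow> I \<subseteq> V \<and> connected_graph I (induced E I) \<and>
     (\<forall>c. is_cycle V E c \<longrightarrow> set c \<subseteq> I)"

end

theory Submission
  imports Defs
begin

lemma walk_succ: "walk V E xs \<longleftrightarrow> xs \<noteq> [] \<and> set xs \<subseteq> V \<and> successively E xs"
  unfolding walk_def successively_conv_nth by blast

lemma succ_take: "successively R xs \<Longrightarrow> successively R (take k xs)"
  by (metis append_take_drop_id successively_append_iff)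

lemma succ_drop: "successively R xs \<Longrightarrow> successively R (drop k xs)"
  by (metis append_take_drop_id successively_append_iff)

lemma succ_join: "successively R s \<Longrightarrow> successively R q \<Longrightarrow> s \<noteq> [] \<Longrightarrow> q \<noteq> [] \<Longrightarrow> last s = hd q
  \<Longrightarrow> successively R (s @ tl q)"
  by (cases q) (auto simp: successively_append_iff successively_Cons)

lemma nth_join1: "t < length s \<Longrightarrow> (s @ tl q) ! t = s ! t"
  by (simp add: nth_append)

lemma nth_join2:
  assumes "s \<noteq> []" "q \<noteq> []" "last s = hd q" "length s - 1 \<le> t" "t < length s + length q - 1"
  shows "(s @ tl q) ! t = q ! (t - (length s - 1))"
proof (cases "t = length s - 1")
  case True then show ?thesis
    using assms by (simp add: nth_append last_conv_nth hd_conv_nth)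
next
  case False
  then have t: "t \<ge> length s" using assms by linarith
  then have "(s @ tl q) ! t = tl q ! (t - length s)" by (simp add: nth_append)
  also have "\<dots> = q ! Suc (t - length s)" using assms t by (cases q) auto
  moreover have "Suc (t - length s) = t - (length s - 1)" using t assms(1) by (cases s) auto
  ultimately show ?thesis by simp
qed

lemma last_join: "s \<noteq> [] \<Longrightarrow> q \<noteq> [] \<Longrightarrow> last s = hd q \<Longrightarrow> last (s @ tl q) = last q"
  by (cases q) auto

lemma hd_join: "s \<noteq> [] \<Longrightarrow> hd (s @ tl q) = hd s" by simp

lemma nb_distinct: "distinct xs \<Longrightarrow> non_backtracking xs"
  unfolding non_backtracking_def by (simp add: nth_eq_iff_index_eq)

lemma nb_seg: "non_backtracking w \<Longrightarrow> non_backtracking (take k (drop a w))"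
  unfolding non_backtracking_def by auto

lemma nb_join:
  assumes "non_backtracking s" "non_backtracking q" "s \<noteq> []" "q \<noteq> []" "last s = hd q"
    "length s \<ge> 2 \<Longrightarrow> length q \<ge> 2 \<Longrightarrow> s ! (length s - 2) \<noteq> q ! 1"
  shows "non_backtracking (s @ tl q)"
  unfolding non_backtracking_def
proof (intro allI impI)
  fix i assume i: "Suc (Suc i) < length (s @ tl q)"
  have L: "length (s @ tl q) = length s + length q - 1" using assms by (cases q) auto
  show "(s @ tl q) ! i \<noteq> (s @ tl q) ! Suc (Suc i)"
  proof (cases "Suc (Suc i) < length s")
    case True
    then show ?thesis using assms(1) by (simp add: nth_append non_backtracking_def)
  next
    case False
    show ?thesis
    proof (cases "i + 2 = length s")
      case True
      have "i = length s - 2" using True by linarith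
      then have "(s @ tl q) ! i = s ! (length s - 2)" using True by (simp add: nth_append)
      moreover have "(s @ tl q) ! Suc (Suc i) = q ! 1"
        using nth_join2[OF assms(3-5), of "Suc (Suc i)"] True i L by simp
      ultimately show ?thesis using assms(6) True i L by auto
    next
      case False2: False
      then have "i \<ge> length s - 1" using False by linarith
      define j where "j = i - (length s - 1)"
      have e1: "(s @ tl q) ! i = q ! j"
        unfolding j_def using nth_join2[OF assms(3-5), of i] i L \<open>i \<ge> length s - 1\<close> by simp
      have e2: "Suc (Suc i) - (length s - 1) = Suc (Suc j)"
        unfolding j_def using \<open>i \<ge> length s - 1\<close> by linarith
      have e3: "(s @ tl q) ! Suc (Suc i) = q ! Suc (Suc j)"
        using nth_join2[OF assms(3-5), of "Suc (Suc i)"] i L \<open>i \<ge> length s - 1\<close> e2 by simp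
      have "Suc (Suc j) < length q" unfolding j_def using i L \<open>i \<ge> length s - 1\<close> by linarith
      then have "q ! j \<noteq> q ! Suc (Suc j)" using assms(2) unfolding non_backtracking_def by blast
      then show ?thesis using e1 e3 by simp
    qed
  qed
qed

lemma distinctify:
  "successively R xs \<Longrightarrow> xs \<noteq> [] \<Longrightarrow> \<exists>ys. successively R ys \<and> ys \<noteq> [] \<and> hd ys = hd xs \<and>
     last ys = last xs \<and> distinct ys \<and> set ys \<subseteq> set xs"
proof (induction "length xs" arbitrary: xs rule: less_induct)
  case less
  show ?case
  proof (cases "distinct xs")
    case True then show ?thesis using less by blast
  next
    case False
    then obtain as y bs cs where xs: "xs = as @ [y] @ bs @ [y] @ cs" using not_distinct_decomp by blast
    let ?ys = "as @ [y] @ cs"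
    have "successively R ?ys" using less(2) unfolding xs
      by (auto simp: successively_append_iff successively_Cons)
    moreover have "length ?ys < length xs" unfolding xs by simp
    moreover have "hd ?ys = hd xs" "last ?ys = last xs" unfolding xs by (cases as; simp)+
    moreover have "set ?ys \<subseteq> set xs" unfolding xs by auto
    moreover have "?ys \<noteq> []" by simp
    ultimately obtain zs where "successively R zs \<and> zs \<noteq> [] \<and> hd zs = hd ?ys \<and>
     last zs = last ?ys \<and> distinct zs \<and> set zs \<subseteq> set ?ys" using less(1)[of ?ys] by blast
    then show ?thesis using \<open>hd ?ys = hd xs\<close> \<open>last ?ys = last xs\<close> \<open>set ?ys \<subseteq> set xs\<close> by (metis order_trans)
  qed
qed


definition scyc :: "('a \<Rightarrow> 'a \<Rightarrow> bool) \<Rightarrow> 'a list \<Rightarrow> bool" where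
 "scyc E c \<longleftrightarrow> length c \<ge> 3 \<and> distinct c \<and> (\<forall>i<length c. E (c!i) (c!(Suc i mod length c)))"

lemma scyc_rotate:
  assumes "scyc E c" shows "scyc E (rotate k c)"
proof -
  let ?n = "length c"
  have n: "?n \<ge> 3" using assms unfolding scyc_def by simp
  have "E (rotate k c ! i) (rotate k c ! (Suc i mod ?n))" if i: "i < ?n" for i
  proof -
    have "0 < ?n" using n by linarith
    then have j: "(k + i) mod ?n < ?n" by simp
    have "E (c ! ((k + i) mod ?n)) (c ! (Suc ((k + i) mod ?n) mod ?n))"
      using assms j unfolding scyc_def by blast
    moreover have "Suc ((k + i) mod ?n) mod ?n = (k + Suc i mod ?n) mod ?n"
    proof -
      have "Suc ((k + i) mod ?n) mod ?n = Suc (k + i) mod ?n" by (rule mod_Suc_eq)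
      moreover have "(k + Suc i mod ?n) mod ?n = (k + Suc i) mod ?n" by (rule mod_add_right_eq)
      ultimately show ?thesis by simp
    qed
    moreover have "Suc i mod ?n < ?n" using \<open>0 < ?n\<close> by simp
    ultimately show ?thesis using i by (simp add: nth_rotate)
  qed
  then show ?thesis using assms unfolding scyc_def by simp
qed

lemma scyc_split:
  assumes d: "scyc E d" and sym: "\<And>x y. E x y \<Longrightarrow> E y x" and ch: "E (d!0) (d!k)"
    and k: "2 \<le> k" "k + 2 \<le> length d"
  shows "scyc E (take (Suc k) d)" "scyc E (d!0 # drop k d)"
proof -
  let ?n = "length d"
  have dd: "distinct d" and adj: "\<And>i. i < ?n \<Longrightarrow> E (d!i) (d!(Suc i mod ?n))"
    using d unfolding scyc_def by auto
  show "scyc E (take (Suc k) d)"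
    unfolding scyc_def
  proof (intro conjI allI impI)
    show "3 \<le> length (take (Suc k) d)" using k by simp
    show "distinct (take (Suc k) d)" using dd by simp
    fix i assume i: "i < length (take (Suc k) d)"
    then have ik: "i \<le> k" using k by simp
    show "E (take (Suc k) d ! i) (take (Suc k) d ! (Suc i mod length (take (Suc k) d)))"
    proof (cases "i = k")
      case True
      then show ?thesis using k sym[OF ch] by simp
    next
      case False
      then have "Suc i < Suc k" using ik by simp
      moreover have "Suc i mod ?n = Suc i" using ik k by simp
      ultimately show ?thesis using adj[of i] ik k by simp
    qed
  qed
  show "scyc E (d!0 # drop k d)"
    unfolding scyc_def
  proof (intro conjI allI impI)
    show "3 \<le> length (d!0 # drop k d)" using k by simp
    have "d ! 0 \<notin> set (drop k d)"
    proof
      assume "d ! 0 \<in> set (drop k d)"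
      then obtain t where "t < ?n - k" "drop k d ! t = d ! 0" by (auto simp: in_set_conv_nth)
      then have "d ! (k + t) = d ! 0" "k + t < ?n" by auto
      then show False using dd k by (subst (asm) nth_eq_iff_index_eq) auto
    qed
    then show "distinct (d!0 # drop k d)" using dd by simp
    fix i assume i: "i < length (d!0 # drop k d)"
    then have iL: "i \<le> ?n - k" by simp
    show "E ((d!0 # drop k d) ! i) ((d!0 # drop k d) ! (Suc i mod length (d!0 # drop k d)))"
    proof (cases "i = 0")
      case True
      then show ?thesis using ch k by simp
    next
      case False
      then obtain t where t: "i = Suc t" by (cases i) auto
      have e1: "(d!0 # drop k d) ! i = d ! (k + t)" using t iL k by simp
      show ?thesis
      proof (cases "i = ?n - k")
        case True
        then have "Suc i mod length (d!0 # drop k d) = 0" using k by simp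
        moreover have "k + t = ?n - 1" using True t k by simp
        moreover have "Suc (?n - 1) = ?n" using k by linarith
        then have "Suc (?n - 1) mod ?n = 0" by simp
        ultimately show ?thesis using e1 adj[of "?n - 1"] k by simp
      next
        case False
        then have "Suc i mod length (d!0 # drop k d) = Suc i" using iL k by simp
        moreover have "(d!0 # drop k d) ! Suc i = d ! (k + Suc t)" using t iL k False by simp
        moreover have "Suc (k + t) mod ?n = Suc (k + t)" using t iL k False by simp
        moreover have "k + t < ?n" using t iL k by simp
        ultimately show ?thesis using e1 adj[of "k + t"] by simp
      qed
    qed
  qed
qed

lemma scyc_split_set:
  assumes "k < length d" "0 < length d"
  shows "set (take (Suc k) d) \<union> set (d!0 # drop k d) = set d"
proof -
  have "set d = set (take k d) \<union> set (drop k d)" by (metis append_take_drop_id set_append)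
  moreover have "set (take k d) \<subseteq> set (take (Suc k) d)" by (simp add: set_take_subset_set_take)
  moreover have "set (take (Suc k) d) \<subseteq> set d" by (rule set_take_subset)
  moreover have "d!0 \<in> set d" using assms by simp
  ultimately show ?thesis by auto
qed

lemma chord_ex:
  assumes c: "scyc E c" and g: "sgraph V E"
    and nc: "\<not> (\<forall>i < length c. \<forall>j < length c. E (c ! i) (c ! j) \<longrightarrow>
        (int i - int j) mod int (length c) \<in> {1, int (length c) - 1})"
  shows "\<exists>i j. i < j \<and> j < length c \<and> 2 \<le> j - i \<and> j - i + 2 \<le> length c \<and> E (c!i) (c!j)"
proof -
  let ?n = "length c"
  obtain i j where ij: "i < ?n" "j < ?n" "E (c!i) (c!j)"
    and m: "(int i - int j) mod int ?n \<notin> {1, int ?n - 1}" using nc by blast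
  have sym: "\<And>x y. E x y \<Longrightarrow> E y x" and irr: "\<And>x. \<not> E x x" using g unfolding sgraph_def by blast+
  have "i \<noteq> j"
  proof
    assume "i = j" then have "E (c!i) (c!i)" using ij(3) by simp
    then show False using irr by blast
  qed
  show ?thesis
  proof (cases "i < j")
    case True
    have e: "(int i - int j) mod int ?n = int i - int j + int ?n"
    proof -
      have "(int i - int j) mod int ?n = (int i - int j + int ?n) mod int ?n" by (simp only: mod_add_self2)
      also have "\<dots> = int i - int j + int ?n" using True ij by (intro mod_pos_pos_trivial) linarith+
      finally show ?thesis .
    qed
    have "int i - int j + int ?n \<noteq> 1" "int i - int j + int ?n \<noteq> int ?n - 1" using m unfolding e by auto
    then have "2 \<le> j - i" "j - i + 2 \<le> ?n" using True ij by linarith+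
    then show ?thesis using True ij by blast
  next
    case False
    then have ji: "j < i" using \<open>i \<noteq> j\<close> by simp
    have e: "(int i - int j) mod int ?n = int i - int j" using ji ij by (intro mod_pos_pos_trivial) linarith+
    have "int i - int j \<noteq> 1" "int i - int j \<noteq> int ?n - 1" using m unfolding e by auto
    then have "2 \<le> i - j" "i - j + 2 \<le> ?n" using ji ij by linarith+
    moreover have "E (c!j) (c!i)" using sym ij(3) by blast
    ultimately show ?thesis using ji ij by blast
  qed
qed

lemma scyc_set_V: "sgraph V E \<Longrightarrow> scyc E c \<Longrightarrow> set c \<subseteq> V"
proof
  fix v assume g: "sgraph V E" and c: "scyc E c" and v: "v \<in> set c"
  then obtain i where "i < length c" "c ! i = v" by (auto simp: in_set_conv_nth)
  then have "E v (c ! (Suc i mod length c))" using c unfolding scyc_def by auto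
  then show "v \<in> V" using g unfolding sgraph_def by blast
qed

lemma chordless:
  assumes g: "sgraph V E"
  shows "scyc E c \<Longrightarrow> \<exists>v\<in>set c. v \<notin> I \<Longrightarrow> \<exists>c'. is_cycle V E c' \<and> set c' \<subseteq> set c \<and> (\<exists>v\<in>set c'. v \<notin> I)"
proof (induction "length c" arbitrary: c rule: less_induct)
  case less
  have sym: "\<And>x y. E x y \<Longrightarrow> E y x" using g unfolding sgraph_def by blast
  show ?case
  proof (cases "\<forall>i < length c. \<forall>j < length c. E (c ! i) (c ! j) \<longrightarrow>
        (int i - int j) mod int (length c) \<in> {1, int (length c) - 1}")
    case True
    have "is_cycle V E c" unfolding is_cycle_def
    proof (intro conjI)
      show "3 \<le> length c" "distinct c" using less(2) unfolding scyc_def by auto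
      show "set c \<subseteq> V" by (rule scyc_set_V[OF g less(2)])
      show "\<forall>i<length c. E (c ! i) (c ! ((i + 1) mod length c))" using less(2) unfolding scyc_def by simp
    qed (rule True)
    then show ?thesis using less(3) by blast
  next
    case False
    then obtain i j where ij: "i < j" "j < length c" "2 \<le> j - i" "j - i + 2 \<le> length c" "E (c!i) (c!j)"
      using chord_ex[OF less(2) g] by blast
    define d where "d = rotate i c"
    define k where "k = j - i"
    have d: "scyc E d" unfolding d_def by (rule scyc_rotate[OF less(2)])
    have ld: "length d = length c" unfolding d_def by simp
    have sd: "set d = set c" unfolding d_def by simp
    have d0: "d ! 0 = c ! i" unfolding d_def proof -
      have "c \<noteq> []" using ij by auto
      then show "rotate i c ! 0 = c ! i" using ij nth_rotate[of 0 c i] by simp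
    qed
    have dk: "d ! k = c ! j" unfolding d_def k_def using ij by (simp add: nth_rotate)
    have sp: "scyc E (take (Suc k) d)" "scyc E (d!0 # drop k d)"
      using scyc_split[OF d sym, of k] d0 dk ij ld unfolding k_def by auto
    have st: "set (take (Suc k) d) \<union> set (d!0 # drop k d) = set c"
    proof -
      have "k < length d" "0 < length d" using ij ld unfolding k_def by auto
      from scyc_split_set[OF this] show ?thesis using sd by simp
    qed
    have l1: "length (take (Suc k) d) < length c" and l2: "length (d!0 # drop k d) < length c"
      using ij ld unfolding k_def by auto
    show ?thesis
    proof (cases "\<exists>v\<in>set (take (Suc k) d). v \<notin> I")
      case True
      then obtain c' where "is_cycle V E c'" "set c' \<subseteq> set (take (Suc k) d)" "\<exists>v\<in>set c'. v \<notin> I"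
        using less(1)[OF l1 sp(1)] by blast
      moreover have "set (take (Suc k) d) \<subseteq> set c" using st by blast
      ultimately show ?thesis by blast
    next
      case False
      have "\<exists>v\<in>set (d!0 # drop k d). v \<notin> I"
      proof -
        obtain v where "v \<in> set c" "v \<notin> I" using less(3) by blast
        then show ?thesis using st False by blast
      qed
      then obtain c' where "is_cycle V E c'" "set c' \<subseteq> set (d!0 # drop k d)" "\<exists>v\<in>set c'. v \<notin> I"
        using less(1)[OF l2 sp(2)] by blast
      moreover have "set (d!0 # drop k d) \<subseteq> set c" using st by blast
      ultimately show ?thesis by blast
    qed
  qed
qed


lemma nb_repeat_cycle:
  assumes g: "sgraph V E" and s: "successively E Z" and nb: "non_backtracking Z"
  shows "i < j \<Longrightarrow> j < length Z \<Longrightarrow> Z!i = Z!j \<Longrightarrow>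
    \<exists>i' j'. i \<le> i' \<and> i' < j' \<and> j' \<le> j \<and> Z!i' = Z!j' \<and> scyc E (take (j'-i') (drop i' Z))"
proof (induction "j - i" arbitrary: i j rule: less_induct)
  case less
  let ?seg = "take (j-i) (drop i Z)"
  have lseg: "length ?seg = j - i" using less by simp
  have segn: "\<And>t. t < j - i \<Longrightarrow> ?seg ! t = Z ! (i + t)" using less by simp
  show ?case
  proof (cases "distinct ?seg")
    case False
    then obtain p q where pq: "p < q" "q < j - i" "?seg ! p = ?seg ! q"
      unfolding distinct_conv_nth lseg by (metis linorder_neqE_nat)
    then have e: "Z ! (i + p) = Z ! (i + q)" using segn by simp
    have "(i + q) - (i + p) < j - i" using pq by linarith
    moreover have "i + p < i + q" "i + q < length Z" using pq less by auto
    ultimately obtain i' j' where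
      "i + p \<le> i'" "i' < j'" "j' \<le> i + q" "Z!i' = Z!j'" "scyc E (take (j'-i') (drop i' Z))"
      using less(1)[of "i + q" "i + p"] e by blast
    then show ?thesis using pq by (intro exI[of _ i'] exI[of _ j']) auto
  next
    case True
    have irr: "\<And>u. \<not> E u u" using g unfolding sgraph_def by blast
    have adj: "\<And>t. Suc t < length Z \<Longrightarrow> E (Z ! t) (Z ! Suc t)" using s successively_nth by blast
    have "j - i \<noteq> 1"
    proof
      assume "j - i = 1" then have "j = Suc i" by simp
      then show False using adj[of i] less irr by auto
    qed
    moreover have "j - i \<noteq> 2"
    proof
      assume "j - i = 2" then have "j = Suc (Suc i)" by simp
      then show False using nb less unfolding non_backtracking_def by auto
    qed
    ultimately have l3: "3 \<le> j - i" using less by linarith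
    have "scyc E ?seg" unfolding scyc_def
    proof (intro conjI allI impI)
      show "3 \<le> length ?seg" using l3 lseg by simp
      show "distinct ?seg" by (rule True)
      fix t assume t: "t < length ?seg"
      have "E (Z ! (i + t)) (Z ! Suc (i + t))" using adj[of "i + t"] t lseg less by simp
      moreover have "?seg ! (Suc t mod length ?seg) = Z ! Suc (i + t)"
      proof (cases "Suc t < j - i")
        case True then show ?thesis using segn lseg by simp
      next
        case False
        then have "Suc t = j - i" using t lseg by simp
        then have "Suc t mod length ?seg = 0" "Suc (i + t) = j" using lseg less by auto
        then show ?thesis using segn[of 0] l3 less by simp
      qed
      moreover have "t < j - i" using t lseg by simp
      then have "?seg ! t = Z ! (i + t)" by (rule segn)
      ultimately show "E (?seg ! t) (?seg ! (Suc t mod length ?seg))" by simp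
    qed
    then show ?thesis using less by blast
  qed
qed


lemma walk_induced_walk: "I \<subseteq> V \<Longrightarrow> walk I (induced E I) w \<Longrightarrow> walk V E w"
  unfolding walk_succ by (auto simp: induced_def elim: successively_mono)

lemma walk_in_I: "set w \<subseteq> I \<Longrightarrow> walk V E w \<Longrightarrow> walk I (induced E I) w"
  unfolding walk_succ by (auto simp: induced_def elim!: successively_mono)

lemma part1_core:
  assumes g: "sgraph V E" and pc: "pre_cycle_core V E I" and x: "x \<in> I" and y: "y \<in> I"
    and w: "w \<in> pi1 V E x y"
  shows "set w \<subseteq> I"
proof (rule ccontr)
  assume nI: "\<not> set w \<subseteq> I"
  have wne: "w \<noteq> []" and ws: "successively E w" and wh: "hd w = x" and wl: "last w = y"
    and wnb: "non_backtracking w" using w unfolding pi1_def walk_succ by auto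
  have IV: "I \<subseteq> V" and conI: "connected_graph I (induced E I)"
    and cyc: "\<And>c. is_cycle V E c \<Longrightarrow> set c \<subseteq> I" using pc unfolding pre_cycle_core_def by auto
  have w0: "w ! 0 \<in> I" using wh wne x by (simp add: hd_conv_nth[symmetric])
  have wL: "w ! (length w - 1) \<in> I" using wl wne y by (metis last_conv_nth)
  have "\<exists>k. k < length w \<and> w ! k \<notin> I" using nI by (auto simp: in_set_conv_nth)
  define k0 where "k0 = (LEAST k. k < length w \<and> w ! k \<notin> I)"
  have k0: "k0 < length w" "w ! k0 \<notin> I" using LeastI_ex[OF \<open>\<exists>k. _\<close>] unfolding k0_def by auto
  have bef: "\<And>k. k < k0 \<Longrightarrow> w ! k \<in> I"
  proof -
    fix k assume "k < k0"
    then have "\<not> (k < length w \<and> w ! k \<notin> I)" unfolding k0_def by (rule not_less_Least)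
    then show "w ! k \<in> I" using \<open>k < k0\<close> k0(1) by auto
  qed
  have k0pos: "k0 \<noteq> 0"
  proof
    assume "k0 = 0" then show False using w0 k0 by simp
  qed
  have "k0 \<noteq> length w - 1" using wL k0 by auto
  then have k0L: "k0 < length w - 1" using k0 by linarith
  have exb: "\<exists>j. k0 < j \<and> j < length w \<and> w ! j \<in> I" using k0L wL by auto
  define b where "b = (LEAST j. k0 < j \<and> j < length w \<and> w ! j \<in> I)"
  have b: "k0 < b" "b < length w" "w ! b \<in> I" using LeastI_ex[OF exb] unfolding b_def by auto
  have mid: "\<And>j. k0 < j \<Longrightarrow> j < b \<Longrightarrow> w ! j \<notin> I"
  proof -
    fix j assume "k0 < j" "j < b"
    have "\<not> (k0 < j \<and> j < length w \<and> w ! j \<in> I)" using \<open>j < b\<close> unfolding b_def by (rule not_less_Least)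
    then show "w ! j \<notin> I" using \<open>k0 < j\<close> \<open>j < b\<close> b(2) by auto
  qed
  define a where "a = k0 - 1"
  have a: "a < k0" "w ! a \<in> I" "Suc a = k0" using k0pos bef unfolding a_def by auto
  have out: "\<And>t. a < t \<Longrightarrow> t < b \<Longrightarrow> w ! t \<notin> I"
  proof -
    fix t assume "a < t" "t < b"
    then show "w ! t \<notin> I" using mid[of t] k0 a by (cases "t = k0") auto
  qed
  define s where "s = take (b - a + 1) (drop a w)"
  have ls: "length s = b - a + 1" unfolding s_def using b a by auto
  have sn: "\<And>t. t \<le> b - a \<Longrightarrow> s ! t = w ! (a + t)" unfolding s_def using b a by auto
  have ls3: "length s \<ge> 3" using ls a b by linarith
  have sne: "s \<noteq> []" using ls3 by auto
  have ss: "successively E s" unfolding s_def by (intro succ_take succ_drop ws)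
  have snb: "non_backtracking s" unfolding s_def by (rule nb_seg[OF wnb])
  have slast: "last s = w ! b" using sne ls sn[of "b - a"] a b by (simp add: last_conv_nth)
  obtain q0 where q0: "walk I (induced E I) q0" "hd q0 = w ! b" "last q0 = w ! a"
    using conI b(3) a(2) unfolding connected_graph_def by blast
  obtain Q where Q: "successively (induced E I) Q" "Q \<noteq> []" "hd Q = w ! b" "last Q = w ! a"
    "distinct Q" "set Q \<subseteq> I"
    using distinctify[of "induced E I" q0] q0 unfolding walk_succ by auto
  have QE: "successively E Q" using Q(1) by (auto simp: induced_def elim: successively_mono)
  define Z where "Z = s @ tl Q"
  have lZ: "length Z = length s + length Q - 1" unfolding Z_def using Q(2) by (cases Q) auto
  have Zs: "successively E Z" unfolding Z_def using succ_join[OF ss QE sne Q(2)] slast Q(3) by simp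
  have Znb: "non_backtracking Z" unfolding Z_def
  proof (rule nb_join[OF snb nb_distinct[OF Q(5)] sne Q(2)])
    show "last s = hd Q" using slast Q(3) by simp
    assume "2 \<le> length s" "2 \<le> length Q"
    have "length s - 2 = b - a - 1" "a + (b - a - 1) = b - 1" using ls a b by linarith+
    then have "s ! (length s - 2) = w ! (b - 1)" using sn[of "b - a - 1"] by simp
    moreover have "w ! (b - 1) \<notin> I" using out[of "b - 1"] a b by linarith
    moreover have "Q ! 1 \<in> I" using Q(6) \<open>2 \<le> length Q\<close> by auto
    ultimately show "s ! (length s - 2) \<noteq> Q ! 1" by auto
  qed
  have Z0: "Z ! 0 = w ! a" unfolding Z_def using sn[of 0] sne by (simp add: nth_append)
  have ZL: "Z ! (length Z - 1) = w ! a"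
  proof -
    have "last Z = w ! a" unfolding Z_def using last_join[OF sne Q(2)] slast Q(3) Q(4) by simp
    moreover have "Z \<noteq> []" unfolding Z_def using sne by simp
    ultimately show ?thesis by (simp add: last_conv_nth)
  qed
  have "0 < length Z - 1" using lZ ls3 Q(2) by (cases Q) auto
  then obtain i' j' where ij: "0 \<le> i'" "i' < j'" "j' \<le> length Z - 1" "Z!i' = Z!j'"
      and sc: "scyc E (take (j'-i') (drop i' Z))"
  proof -
    have "length Z - 1 < length Z" "Z ! 0 = Z ! (length Z - 1)" using \<open>0 < length Z - 1\<close> Z0 ZL by auto
    from nb_repeat_cycle[OF g Zs Znb \<open>0 < length Z - 1\<close> this] show thesis using that by blast
  qed
  let ?cy = "take (j'-i') (drop i' Z)"
  have lcy: "length ?cy = j' - i'" using ij lZ by auto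
  have l3: "3 \<le> j' - i'" using sc lcy unfolding scyc_def by simp
  have cyn: "\<And>t. t < j' - i' \<Longrightarrow> ?cy ! t = Z ! (i' + t)" using ij lZ by auto
  have Zs_n: "\<And>t. t < length s \<Longrightarrow> Z ! t = s ! t" unfolding Z_def by (simp add: nth_append)
  have "\<exists>v\<in>set ?cy. v \<notin> I"
  proof (cases "i' = 0")
    case True
    have "?cy ! 1 = w ! (a + 1)" using cyn[of 1] l3 True Zs_n[of 1] sn[of 1] ls3 ls by simp
    moreover have "w ! (a + 1) \<notin> I" using out[of "a + 1"] ls3 ls by simp
    moreover have "?cy ! 1 \<in> set ?cy" using lcy l3 by (intro nth_mem) simp
    ultimately show ?thesis by metis
  next
    case False
    show ?thesis
    proof (cases "i' \<le> length s - 2")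
      case True
      have "?cy ! 0 = w ! (a + i')" using cyn[of 0] l3 True Zs_n[of i'] sn[of i'] ls3 ls by simp
      moreover have "w ! (a + i') \<notin> I" using out[of "a + i'"] ls3 ls True False by simp
      moreover have "?cy ! 0 \<in> set ?cy" using lcy l3 by (intro nth_mem) simp
      ultimately show ?thesis by metis
    next
      case False2: False
      have e1: "Z ! i' = Q ! (i' - (length s - 1))" unfolding Z_def
        using nth_join2[OF sne Q(2), of i'] slast Q(3) False2 ij lZ by simp
      have e2: "Z ! j' = Q ! (j' - (length s - 1))" unfolding Z_def
        using nth_join2[OF sne Q(2), of j'] slast Q(3) False2 ij lZ by simp
      have "i' - (length s - 1) < length Q" "j' - (length s - 1) < length Q" using ij lZ False2 by auto
      then have "i' - (length s - 1) = j' - (length s - 1)"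
        using e1 e2 ij(4) Q(5) nth_eq_iff_index_eq by metis
      then show ?thesis using False2 ij by linarith
    qed
  qed
  then obtain c' where "is_cycle V E c'" "\<exists>v\<in>set c'. v \<notin> I" using chordless[OF g sc] by blast
  then show False using cyc by blast
qed


lemma part2:
  assumes g: "sgraph V E" and conn: "connected_graph V E" and IV: "I \<subseteq> V" and x: "x \<in> I"
    and eq: "pi1 I (induced E I) x x = pi1 V E x x" and c: "is_cycle V E c"
  shows "set c \<subseteq> component I (induced E I) x"
proof -
  have sym: "\<And>u v. E u v \<Longrightarrow> E v u" using g unfolding sgraph_def by blast
  have sc: "scyc E c" using c unfolding is_cycle_def scyc_def by simp
  let ?n = "length c"
  have n3: "?n \<ge> 3" and cV: "set c \<subseteq> V" using c unfolding is_cycle_def by auto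
  have "c ! 0 \<in> set c" using n3 by (intro nth_mem) linarith
  then have "c ! 0 \<in> V" using cV by blast
  then obtain p0 where p0: "walk V E p0" "hd p0 = x" "last p0 = c ! 0"
    using conn x IV unfolding connected_graph_def by blast
  define PP where "PP p \<longleftrightarrow> p \<noteq> [] \<and> set p \<subseteq> V \<and> successively E p \<and> hd p = x \<and> last p \<in> set c" for p
  have "c ! 0 \<in> set c" using n3 by (intro nth_mem) linarith
  then have "PP p0" using p0 unfolding PP_def walk_succ by auto
  then obtain P where P: "PP P" and Pmin: "\<And>p. PP p \<Longrightarrow> length P \<le> length p"
    using ex_has_least_nat[of PP p0 length] by blast
  have Pne: "P \<noteq> []" and PV: "set P \<subseteq> V" and Ps: "successively E P" and Ph: "hd P = x"
    and Pl: "last P \<in> set c" using P unfolding PP_def by auto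
  have Pd: "distinct P"
  proof (rule ccontr)
    assume "\<not> distinct P"
    then obtain as y bs cs where xs: "P = as @ [y] @ bs @ [y] @ cs" using not_distinct_decomp by blast
    let ?ys = "as @ [y] @ cs"
    have "successively E ?ys" using Ps unfolding xs
      by (auto simp: successively_append_iff successively_Cons)
    moreover have "hd ?ys = hd P" "last ?ys = last P" unfolding xs by (cases as; simp)+
    moreover have "set ?ys \<subseteq> set P" unfolding xs by auto
    ultimately have "PP ?ys" using P unfolding PP_def by auto
    then show False using Pmin[of ?ys] unfolding xs by simp
  qed
  have Pout: "\<And>t. Suc t < length P \<Longrightarrow> P ! t \<notin> set c"
  proof
    fix t assume t: "Suc t < length P" and pt: "P ! t \<in> set c"
    have "PP (take (Suc t) P)" unfolding PP_def using Pne PV Ps Ph pt t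
      by (auto simp: succ_take last_conv_nth dest: in_set_takeD)
    then show False using Pmin[of "take (Suc t) P"] t by simp
  qed
  obtain k where k: "k < ?n" "c ! k = last P" using Pl by (auto simp: in_set_conv_nth)
  define c' where "c' = rotate k c"
  have sc': "scyc E c'" unfolding c'_def by (rule scyc_rotate[OF sc])
  have lc': "length c' = ?n" and setc': "set c' = set c" unfolding c'_def by auto
  have c'0: "c' ! 0 = last P"
  proof -
    have "c \<noteq> []" using n3 by auto
    then show ?thesis unfolding c'_def using k nth_rotate[of 0 c k] by simp
  qed
  have c'd: "distinct c'" and c'adj: "\<And>i. i < ?n \<Longrightarrow> E (c'!i) (c'!(Suc i mod ?n))"
    using sc' lc' unfolding scyc_def by auto
  define C where "C = c' @ [c' ! 0]"
  have lC: "length C = Suc ?n" unfolding C_def using lc' by simp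
  have Cn: "\<And>i. i < ?n \<Longrightarrow> C ! i = c' ! i" unfolding C_def using lc' by (simp add: nth_append)
  have Cl: "C ! ?n = c' ! 0" unfolding C_def using lc' by (simp add: nth_append)
  have Cs: "successively E C" unfolding successively_conv_nth
  proof (intro allI impI)
    fix i assume "Suc i < length C"
    then have i: "i < ?n" using lC by simp
    show "E (C ! i) (C ! Suc i)"
    proof (cases "Suc i < ?n")
      case True then show ?thesis using c'adj[OF i] Cn i by simp
    next
      case False then have "Suc i = ?n" using i by simp
      then show ?thesis using c'adj[OF i] Cn[OF i] Cl by simp
    qed
  qed
  have Cnb: "non_backtracking C" unfolding non_backtracking_def
  proof (intro allI impI)
    fix i assume "Suc (Suc i) < length C"
    then have i: "Suc (Suc i) \<le> ?n" using lC by simp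
    show "C ! i \<noteq> C ! Suc (Suc i)"
    proof (cases "Suc (Suc i) < ?n")
      case True then show ?thesis using Cn c'd lc' by (simp add: nth_eq_iff_index_eq)
    next
      case False then have e: "Suc (Suc i) = ?n" using i by simp
      then have "i \<noteq> 0" using n3 by auto
      have "i < ?n" using e by simp
      then have "c' ! i \<noteq> c' ! 0" using \<open>i \<noteq> 0\<close> c'd lc' n3 by (subst nth_eq_iff_index_eq) auto
      then show ?thesis using e Cn[of i] Cl \<open>i < ?n\<close> by simp
    qed
  qed
  have Cne: "C \<noteq> []" unfolding C_def by simp
  have Ch: "hd C = last P" unfolding C_def using c'0 lc' n3 by (cases c') auto
  have CL: "last C = last P" unfolding C_def using c'0 by simp
  define W1 where "W1 = P @ tl C"
  have W1s: "successively E W1" unfolding W1_def by (rule succ_join[OF Ps Cs Pne Cne Ch[symmetric]])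
  have W1nb: "non_backtracking W1" unfolding W1_def
  proof (rule nb_join[OF nb_distinct[OF Pd] Cnb Pne Cne Ch[symmetric]])
    assume "2 \<le> length P" "2 \<le> length C"
    have "P ! (length P - 2) \<notin> set c" using Pout[of "length P - 2"] \<open>2 \<le> length P\<close> by simp
    moreover have "C ! 1 \<in> set c"
    proof -
      have "1 < ?n" using n3 by linarith
      then have "c' ! 1 \<in> set c'" using lc' by (intro nth_mem) simp
      then show ?thesis using Cn[OF \<open>1 < ?n\<close>] setc' by simp
    qed
    ultimately show "P ! (length P - 2) \<noteq> C ! 1" by auto
  qed
  have lW1: "length W1 = length P + ?n" unfolding W1_def using lC by simp
  have W1ne: "W1 \<noteq> []" using Pne unfolding W1_def by simp
  have W1L: "last W1 = last P" unfolding W1_def using last_join[OF Pne Cne Ch[symmetric]] CL by simp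
  define R where "R = rev P"
  have Rne: "R \<noteq> []" and Rh: "hd R = last P" and Rl: "last R = hd P" unfolding R_def using Pne
    by (auto simp: hd_rev last_rev)
  have Rs: "successively E R" unfolding R_def successively_rev
    using Ps by (rule successively_mono) (rule sym)
  define W where "W = W1 @ tl R"
  have Ws: "successively E W" unfolding W_def using succ_join[OF W1s Rs W1ne Rne] W1L Rh by simp
  have Wnb: "non_backtracking W" unfolding W_def
  proof (rule nb_join[OF W1nb nb_distinct] )
    show "distinct R" unfolding R_def using Pd by simp
    show "W1 \<noteq> []" "R \<noteq> []" "last W1 = hd R" using W1ne Rne W1L Rh by auto
    assume "2 \<le> length W1" "2 \<le> length R"
    have "W1 ! (length W1 - 2) = C ! (?n - 1)"
    proof -
      have "length W1 - 2 - (length P - 1) = ?n - 1" using lW1 Pne n3 by (cases P) auto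
      moreover have "length P - 1 \<le> length W1 - 2" "length W1 - 2 < length P + length C - 1"
        using lW1 lC n3 by auto
      moreover have "(P @ tl C) ! (length W1 - 2) = C ! (length W1 - 2 - (length P - 1))"
        using nth_join2[OF Pne Cne Ch[symmetric], of "length W1 - 2"] calculation(2,3) by blast
      ultimately show ?thesis unfolding W1_def by simp
    qed
    moreover have "C ! (?n - 1) \<in> set c"
    proof -
      have "?n - 1 < ?n" using n3 by linarith
      then have "c' ! (?n - 1) \<in> set c'" using lc' by (intro nth_mem) simp
      then show ?thesis using Cn[OF \<open>?n - 1 < ?n\<close>] setc' by simp
    qed
    moreover have "R ! 1 = P ! (length P - 2)" unfolding R_def using \<open>2 \<le> length R\<close> unfolding R_def
      by (simp add: rev_nth numeral_2_eq_2)
    moreover have "P ! (length P - 2) \<notin> set c" using Pout[of "length P - 2"] \<open>2 \<le> length R\<close> unfolding R_def by simp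
    ultimately show "W1 ! (length W1 - 2) \<noteq> R ! 1" by auto
  qed
  have Wne: "W \<noteq> []" unfolding W_def using W1ne by simp
  have Wh: "hd W = x" unfolding W_def W1_def using Pne Ph by simp
  have WL: "last W = x" unfolding W_def using last_join[OF W1ne Rne] W1L Rh Rl Ph by simp
  have setW: "set W = set P \<union> set (tl C) \<union> set (tl R)" unfolding W_def W1_def by auto
  have c'cons: "c' = c' ! 0 # tl c'" using lc' n3 by (cases c') auto
  then have setc'2: "set c' = insert (c' ! 0) (set (tl c'))" by (metis list.simps(15))
  have tlC: "tl C = tl c' @ [c' ! 0]" unfolding C_def using c'cons by (metis append_Cons list.sel(3))
  have "set (tl C) \<subseteq> set c" "set R \<subseteq> V" unfolding tlC R_def using setc' setc'2 PV by auto
  moreover have "set (tl R) \<subseteq> set R" using Rne by (cases R) auto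
  ultimately have WV: "set W \<subseteq> V" using setW PV cV by blast
  have "W \<in> pi1 V E x x" unfolding pi1_def walk_succ using Wne WV Ws Wh WL Wnb by simp
  then have "W \<in> pi1 I (induced E I) x x" using eq by simp
  then have Wi: "W \<noteq> []" "set W \<subseteq> I" "successively (induced E I) W" unfolding pi1_def walk_succ by auto
  have Wcomp: "set W \<subseteq> component I (induced E I) x"
  proof
    fix v assume "v \<in> set W"
    then obtain t where t: "t < length W" "W ! t = v" by (auto simp: in_set_conv_nth)
    have "walk I (induced E I) (take (Suc t) W)" unfolding walk_succ using Wi t
      by (auto simp: succ_take dest: in_set_takeD)
    moreover have "hd (take (Suc t) W) = x" using Wh Wne by simp
    moreover have "last (take (Suc t) W) = v"
    proof -
      have "take (Suc t) W \<noteq> []" using Wne by simp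
      then have "last (take (Suc t) W) = take (Suc t) W ! (length (take (Suc t) W) - 1)" by (rule last_conv_nth)
      then show ?thesis using t by simp
    qed
    ultimately show "v \<in> component I (induced E I) x" unfolding component_def by blast
  qed
  have "set c \<subseteq> set (tl C)"
    unfolding tlC using setc' setc'2 by auto
  then show ?thesis using Wcomp setW by blast
qed

theorem lemma2p5:
  assumes "sgraph V E" and "connected_graph V E" and "I \<subseteq> V"
  shows "(pre_cycle_core V E I \<longrightarrow>
            (\<forall>x\<in>I. \<forall>y\<in>I. pi1 I (induced E I) x y = pi1 V E x y))
       \<and> (\<forall>x\<in>I. pi1 I (induced E I) x x = pi1 V E x x \<longrightarrow>
            (\<forall>c. is_cycle V E c \<longrightarrow> set c \<subseteq> component I (induced E I) x))"
proof (intro conjI impI ballI allI)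
  fix x y assume pc: "pre_cycle_core V E I" and x: "x \<in> I" and y: "y \<in> I"
  show "pi1 I (induced E I) x y = pi1 V E x y"
  proof
    show "pi1 I (induced E I) x y \<subseteq> pi1 V E x y"
      unfolding pi1_def using walk_induced_walk[OF assms(3)] by blast
    show "pi1 V E x y \<subseteq> pi1 I (induced E I) x y"
    proof
      fix w assume w: "w \<in> pi1 V E x y"
      have "set w \<subseteq> I" by (rule part1_core[OF assms(1) pc x y w])
      then show "w \<in> pi1 I (induced E I) x y" using w walk_in_I unfolding pi1_def by blast
    qed
  qed
next
  fix x c assume x: "x \<in> I" and eq: "pi1 I (induced E I) x x = pi1 V E x x" and c: "is_cycle V E c"
  show "set c \<subseteq> component I (induced E I) x" by (rule part2[OF assms x eq c])
qed

end
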